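(* If $\gamma<1$, then for all $k\ge0$, $$\|\mathbf H^{k+1}-\mathbf W^\infty\mathbf H^{k+1}\|_F\le(1-\gamma(1-\sigma))\|\mathbf H^k-\mathbf W^\infty\mathbf H^k\|_F+4\gamma\|\mathbf E^k\|_F+2\gamma(1-\delta)\|\mathbf H^k-\tilde{\mathbf H}^k\|_F+L_2\|\mathbf x^{k+1}-\mathbf x^k\|.$$
   Context: $W\in\mathbb{R}^{n\times n}$ is entrywise nonnegative, symmetric, $W1_n=1_n$, with $w_{ij}=0$ iff $j$ is neither $i$ nor a neighbor of $i$ in an undirected connected graph; $\sigma=\|W-\frac1n1_n1_n^T\|$. Each $f_i:\mathbb{R}^d\to\mathbb{R}$ is $C^2$ with $L_1$-Lipschitz gradient and $L_2$-Lipschitz Hessian. $\mathcal Q:\mathbb{R}^{d\times d}\to\mathbb{R}^{d\times d}$ is deterministic with $\|\mathcal Q(A)-A\|_F\le(1-\delta)\|A\|_F$, $\delta\in(0,1]$, applied blockwise to $nd\times d$ matrices. Notation: $\mathbf x=[x_1;\dots;x_n]\in\mathbb{R}^{nd}$; $\mathbf W=W\otimes I_d$, $\mathbf W^\infty=\frac1n1_n1_n^T\otimes I_d$; $\nabla^2f(\mathbf x)=[\nabla^2f_1(x_1);\dots;\nabla^2f_n(x_n)]\in\mathbb{R}^{nd\times d}$. With $\gamma>0$, arbitrary points $\mathbf x^k\in\mathbb{R}^{nd}$, and arbitrary $\mathbf E^0,\tilde{\mathbf H}^0$, $H_i^0=\nabla^2f_i(x_i^0)$, the sequences satisfy for $k\ge0$: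 $\mathbf E^{k+1}=\mathbf E^k+\mathbf H^k-\tilde{\mathbf H}^k-\mathcal Q(\mathbf E^k+\mathbf H^k-\tilde{\mathbf H}^k)$; $\tilde{\mathbf H}^{k+1}=\tilde{\mathbf H}^k+\mathcal Q(\mathbf H^k-\tilde{\mathbf H}^k)$; $\hat{\mathbf H}^k=\tilde{\mathbf H}^k+\mathcal Q(\mathbf E^k+\mathbf H^k-\tilde{\mathbf H}^k)$; $\mathbf H^{k+1}=\mathbf H^k-\gamma(I_{nd}-\mathbf W)\hat{\mathbf H}^k+\nabla^2f(\mathbf x^{k+1})-\nabla^2f(\mathbf x^k)$. *)

theory Defs
  imports "HOL-Analysis.Analysis"
begin

text \<open>Stacked objects: an element of real^'d^'d^'n is an nd x d matrix made of n blocks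
  of size d x d (block i is X $ i).  The norm on real^'d^'d^'n is the Frobenius norm,
  the norm on real^'d^'n is the Euclidean norm of the stacked vector.\<close>

definition blk_mult :: "real^'n^'n \<Rightarrow> real^'d^'d^'n \<Rightarrow> real^'d^'d^'n" where
  "blk_mult W X = (\<chi> i. \<Sum>j\<in>UNIV. (W $ i $ j) *\<^sub>R (X $ j))"
  \<comment> \<open>(W \<otimes> I_d) X\<close>

definition avg_mat :: "real^'n^'n" where
  "avg_mat = (\<chi> i j. 1 / real CARD('n))"

definition blk_map :: "(real^'d^'d \<Rightarrow> real^'d^'d) \<Rightarrow> real^'d^'d^'n \<Rightarrow> real^'d^'d^'n" where
  "blk_map Q X = (\<chi> i. Q (X $ i))"

end

theory Submission
  imports Defs
begin

lemma normsq_vec: "(norm (v::real^'n))\<^sup>2 = (\<Sum>i\<in>UNIV. (v$i)\<^sup>2)"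
  unfolding power2_norm_eq_inner by (simp add: inner_vec_def power2_eq_square)

lemma normsq_gen: "(norm (v::('a::real_normed_vector)^'n))\<^sup>2 = (\<Sum>i\<in>UNIV. (norm (v$i))\<^sup>2)"
  unfolding norm_vec_def L2_set_def by (simp add: sum_nonneg)

lemma blockwise_le:
  fixes F :: "('a::real_normed_vector)^'n" and G :: "('b::real_normed_vector)^'n"
  assumes "\<And>i. norm (F$i) \<le> c * norm (G$i)" "0 \<le> c"
  shows "norm F \<le> c * norm G"
proof -
  have "norm F = L2_set (\<lambda>i. norm (F$i)) UNIV" by (simp add: norm_vec_def)
  also have "\<dots> \<le> L2_set (\<lambda>i. c * norm (G$i)) UNIV"
    by (rule L2_set_mono) (use assms in auto)
  also have "\<dots> = c * norm G" by (simp add: norm_vec_def L2_set_right_distrib assms)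
  finally show ?thesis .
qed

lemma lift_le:
  fixes M :: "real^'n^'n" and Z :: "real^'d^'d^'n"
  assumes b: "\<And>v. norm (M *v v) \<le> c * norm v" and c: "0 \<le> c"
  shows "norm (blk_mult M Z) \<le> c * norm Z"
proof (rule power2_le_imp_le)
  define V where "V a b = (\<chi> j. Z$j$a$b)" for a b
  have "(norm (blk_mult M Z))\<^sup>2 = (\<Sum>i\<in>UNIV. \<Sum>a\<in>UNIV. \<Sum>b\<in>UNIV. ((blk_mult M Z)$i$a$b)\<^sup>2)"
    unfolding power2_norm_eq_inner by (simp add: inner_vec_def power2_eq_square)
  also have "\<dots> = (\<Sum>a\<in>UNIV. \<Sum>b\<in>UNIV. \<Sum>i\<in>UNIV. ((M *v V a b)$i)\<^sup>2)"
  proof -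
    have e: "\<And>i a b. (blk_mult M Z)$i$a$b = (M *v V a b)$i"
      by (simp add: blk_mult_def V_def matrix_vector_mult_def)
    have "(\<Sum>i\<in>UNIV. \<Sum>a\<in>UNIV. \<Sum>b\<in>UNIV. ((M *v V a b)$i)\<^sup>2) = (\<Sum>a\<in>UNIV. \<Sum>i\<in>UNIV. \<Sum>b\<in>UNIV. ((M *v V a b)$i)\<^sup>2)"
      by (rule sum.swap)
    also have "\<dots> = (\<Sum>a\<in>UNIV. \<Sum>b\<in>UNIV. \<Sum>i\<in>UNIV. ((M *v V a b)$i)\<^sup>2)"
      by (rule sum.cong[OF refl], rule sum.swap)
    finally show ?thesis by (simp add: e)
  qed
  also have "\<dots> = (\<Sum>a\<in>UNIV. \<Sum>b\<in>UNIV. (norm (M *v V a b))\<^sup>2)"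
    by (simp add: normsq_vec)
  also have "\<dots> \<le> (\<Sum>a\<in>UNIV. \<Sum>b\<in>UNIV. c\<^sup>2 * (norm (V a b))\<^sup>2)"
    apply (intro sum_mono)
    by (metis b norm_ge_zero power_mono power_mult_distrib)
  also have "\<dots> = c\<^sup>2 * (\<Sum>a\<in>UNIV. \<Sum>b\<in>UNIV. \<Sum>i\<in>UNIV. (Z$i$a$b)\<^sup>2)"
    by (simp add: normsq_vec sum_distrib_left V_def)
  also have "\<dots> = (c * norm Z)\<^sup>2"
  proof -
    have "(\<Sum>a\<in>UNIV. \<Sum>b\<in>UNIV. \<Sum>i\<in>UNIV. (Z$i$a$b)\<^sup>2) = (\<Sum>a\<in>UNIV. \<Sum>i\<in>UNIV. \<Sum>b\<in>UNIV. (Z$i$a$b)\<^sup>2)"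
      by (rule sum.cong[OF refl], rule sum.swap)
    also have "\<dots> = (\<Sum>i\<in>UNIV. \<Sum>a\<in>UNIV. \<Sum>b\<in>UNIV. (Z$i$a$b)\<^sup>2)"
      by (rule sum.swap)
    also have "\<dots> = (norm Z)\<^sup>2"
      unfolding power2_norm_eq_inner by (simp add: inner_vec_def power2_eq_square)
    finally show ?thesis by (simp add: power_mult_distrib)
  qed
  finally show "(norm (blk_mult M Z))\<^sup>2 \<le> (c * norm Z)\<^sup>2" .
  show "0 \<le> c * norm Z" using c by simp
qed

lemma blk_comp: "blk_mult A (blk_mult B Y) = blk_mult (A ** B) Y"
  unfolding blk_mult_def matrix_matrix_mult_def
  apply (simp add: vec_eq_iff scaleR_sum_right scaleR_sum_left sum_component)
  apply (intro allI)
  apply (subst sum.swap) by simp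

lemma blk_add: "blk_mult M (X + Y) = blk_mult M X + blk_mult M Y"
  by (simp add: blk_mult_def vec_eq_iff scaleR_add_right sum.distrib)
lemma blk_diff: "blk_mult M (X - Y) = blk_mult M X - blk_mult M Y"
  by (simp add: blk_mult_def vec_eq_iff scaleR_diff_right sum_subtractf)
lemma blk_scale: "blk_mult M (c *\<^sub>R X) = c *\<^sub>R blk_mult M X"
  unfolding blk_mult_def
  by (simp add: vec_eq_iff scaleR_sum_right ac_simps)
lemma blk_mdiff: "blk_mult (A - B) X = blk_mult A X - blk_mult B X"
  by (simp add: blk_mult_def vec_eq_iff scaleR_diff_left sum_subtractf)
lemma blk_id: "blk_mult (mat 1) X = X"
proof -
  have "(\<Sum>j\<in>UNIV. (mat 1 $ i $ j) *\<^sub>R (X$j)) = X$i" for i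
  proof -
    have "(\<Sum>j\<in>UNIV. (mat 1 $ i $ j) *\<^sub>R (X$j)) = (\<Sum>j\<in>UNIV. if i = j then X$j else 0)"
      by (rule sum.cong) (auto simp: mat_def)
    then show ?thesis by simp
  qed
  then show ?thesis unfolding blk_mult_def by (simp add: vec_eq_iff[of _ X])
qed

lemma avg_avg: "(avg_mat :: real^'n^'n) ** avg_mat = avg_mat"
proof -
  have e: "(\<Sum>k\<in>(UNIV::'n set). 1 / real CARD('n) * (1 / real CARD('n))) = 1 / real CARD('n)"
    by (simp add: sum_constant)
  show ?thesis unfolding avg_mat_def matrix_matrix_mult_def
    by (simp only: vec_eq_iff vec_lambda_beta e; simp)
qed

lemma W_col: fixes W :: "real^'n^'n"
  assumes "\<And>i. (\<Sum>j\<in>UNIV. W $ i $ j) = 1" "transpose W = W"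
  shows "(\<Sum>j\<in>UNIV. W $ j $ i) = 1"
proof -
  have "W $ j $ i = W $ i $ j" for j
  proof -
    have "transpose W $ i $ j = W $ j $ i" by (simp add: transpose_def)
    then show ?thesis using assms(2) by simp
  qed
  then show ?thesis using assms(1) by simp
qed

lemma avg_W: fixes W :: "real^'n^'n"
  assumes "\<And>i. (\<Sum>j\<in>UNIV. W $ i $ j) = 1" "transpose W = W"
  shows "avg_mat ** W = avg_mat" "W ** avg_mat = avg_mat"
proof -
  have e1: "(\<Sum>k\<in>UNIV. 1 / real CARD('n) * W$k$j) = 1 / real CARD('n)" for j
    using W_col[OF assms, of j] by (simp only: sum_distrib_left[symmetric]; simp)
  have e2: "(\<Sum>k\<in>UNIV. W$i$k * (1 / real CARD('n))) = 1 / real CARD('n)" for i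
    using assms(1)[of i] by (simp only: sum_distrib_right[symmetric]; simp)
  show "avg_mat ** W = avg_mat" unfolding avg_mat_def matrix_matrix_mult_def
    by (simp only: vec_eq_iff vec_lambda_beta e1; simp)
  show "W ** avg_mat = avg_mat" unfolding avg_mat_def matrix_matrix_mult_def
    by (simp only: vec_eq_iff vec_lambda_beta e2; simp)
qed

lemma jensen_row:
  fixes w v :: "'n::finite \<Rightarrow> real"
  assumes "\<And>j. w j \<ge> 0" "(\<Sum>j\<in>UNIV. w j) = 1"
  shows "(\<Sum>j\<in>UNIV. w j * v j)\<^sup>2 \<le> (\<Sum>j\<in>UNIV. w j * (v j)\<^sup>2)"
proof -
  define s where "s = (\<Sum>j\<in>UNIV. w j * v j)"
  have "0 \<le> (\<Sum>j\<in>UNIV. w j * (v j - s)\<^sup>2)" by (intro sum_nonneg) (simp add: assms)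
  also have "\<dots> = (\<Sum>j\<in>UNIV. w j * (v j)\<^sup>2) - 2 * s * (\<Sum>j\<in>UNIV. w j * v j) + s\<^sup>2 * (\<Sum>j\<in>UNIV. w j)"
    by (simp add: power2_diff algebra_simps sum.distrib sum_subtractf sum_distrib_left sum_distrib_right)
  finally show ?thesis using assms(2) by (simp add: s_def power2_eq_square)
qed

lemma W_vec_bound:
  fixes W :: "real^'n^'n"
  assumes "\<And>i j. W $ i $ j \<ge> 0" "\<And>i. (\<Sum>j\<in>UNIV. W $ i $ j) = 1" "transpose W = W"
  shows "norm (W *v v) \<le> 1 * norm v"
proof (rule power2_le_imp_le)
  have c: "(\<Sum>i\<in>UNIV. W $ i $ j) = 1" for j
    by (rule W_col[OF assms(2,3)])
  have "(norm (W *v v))\<^sup>2 = (\<Sum>i\<in>UNIV. (\<Sum>j\<in>UNIV. W$i$j * v$j)\<^sup>2)"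
    by (simp add: normsq_vec matrix_vector_mult_def)
  also have "\<dots> \<le> (\<Sum>i\<in>UNIV. \<Sum>j\<in>UNIV. W$i$j * (v$j)\<^sup>2)"
    by (intro sum_mono jensen_row) (use assms in auto)
  also have "\<dots> = (\<Sum>j\<in>UNIV. (\<Sum>i\<in>UNIV. W$i$j) * (v$j)\<^sup>2)"
    by (subst sum.swap) (simp add: sum_distrib_right)
  also have "\<dots> = (norm v)\<^sup>2" by (simp add: c normsq_vec)
  finally show "(norm (W *v v))\<^sup>2 \<le> (1 * norm v)\<^sup>2" by simp
qed simp

lemma P_vec_bound:
  shows "norm (((mat 1 - avg_mat) :: real^'n^'n) *v v) \<le> 1 * norm v"
proof (rule power2_le_imp_le)
  define m where "m = (\<Sum>j\<in>UNIV. v$j) / real CARD('n)"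
  have e0: "(avg_mat *v v) $ i = m" for i
    by (simp add: matrix_vector_mult_def avg_mat_def m_def sum_divide_distrib)
  have e: "((mat 1 - avg_mat) *v v) $ i = v$i - m" for i
    by (simp add: matrix_vector_mult_diff_rdistrib e0)
  have s: "(\<Sum>j\<in>UNIV. v$j) = real CARD('n) * m" by (simp add: m_def)
  have "(norm ((mat 1 - avg_mat) *v v))\<^sup>2 = (\<Sum>i\<in>UNIV. (v$i - m)\<^sup>2)"
    by (simp add: normsq_vec e)
  also have "\<dots> = (\<Sum>i\<in>UNIV. (v$i)\<^sup>2) - 2 * m * (\<Sum>j\<in>UNIV. v$j) + real CARD('n) * m\<^sup>2"
    by (simp add: power2_diff sum.distrib sum_subtractf sum_distrib_left algebra_simps)
  also have "\<dots> \<le> (\<Sum>i\<in>UNIV. (v$i)\<^sup>2)"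
  proof -
    have "0 \<le> real CARD('n) * m\<^sup>2" by simp
    then show ?thesis unfolding s by (simp add: power2_eq_square algebra_simps)
  qed
  finally show "(norm (((mat 1 - avg_mat) :: real^'n^'n) *v v))\<^sup>2 \<le> (1 * norm v)\<^sup>2"
    by (simp add: normsq_vec)
qed simp

lemma Qmap_bound:
  assumes "\<And>A. norm (Q A - A) \<le> (1 - \<delta>) * norm A" "\<delta> \<le> 1"
  shows "norm (blk_map Q Y - Y) \<le> (1 - \<delta>) * norm (Y :: real^'d^'d^'n)"
  by (rule blockwise_le) (use assms in \<open>auto simp: blk_map_def\<close>)


lemma tri4: "norm (a + b - c + d) \<le> norm a + norm b + norm c + norm (d::'a::real_normed_vector)"
  using norm_triangle_ineq[of "a+b-c" d] norm_triangle_ineq4[of "a+b" c] norm_triangle_ineq[of a b]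
  by linarith

theorem lemma8:
  fixes W :: "real^'n^'n"
    and Adj :: "'n \<Rightarrow> 'n \<Rightarrow> bool"
    and f :: "'n \<Rightarrow> real^'d \<Rightarrow> real"
    and grad :: "'n \<Rightarrow> real^'d \<Rightarrow> real^'d"
    and hess :: "'n \<Rightarrow> real^'d \<Rightarrow> real^'d^'d"
    and L1 L2 \<gamma> \<delta> \<sigma> :: real
    and Q :: "real^'d^'d \<Rightarrow> real^'d^'d"
    and x :: "nat \<Rightarrow> real^'d^'n"
    and E Ht Hh H :: "nat \<Rightarrow> real^'d^'d^'n"
  assumes Adj_sym: "\<And>i j. Adj i j \<Longrightarrow> Adj j i"
    and Adj_irrefl: "\<And>i. \<not> Adj i i"
    and Adj_conn: "\<And>i j. Adj\<^sup>*\<^sup>* i j"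
    and W_nonneg: "\<And>i j. W $ i $ j \<ge> 0"
    and W_sym: "transpose W = W"
    and W_stoch: "\<And>i. (\<Sum>j\<in>UNIV. W $ i $ j) = 1"
    and W_pattern: "\<And>i j. W $ i $ j = 0 \<longleftrightarrow> (j \<noteq> i \<and> \<not> Adj i j)"
    and sigma_def: "\<sigma> = onorm (\<lambda>v. (W - avg_mat) *v v)"
    and f_grad: "\<And>i y. (f i has_derivative (\<lambda>h. grad i y \<bullet> h)) (at y)"
    and grad_hess: "\<And>i y. (grad i has_derivative (\<lambda>h. hess i y *v h)) (at y)"
    and hess_cont: "\<And>i. continuous_on UNIV (hess i)"
    and grad_lip: "\<And>i y z. norm (grad i y - grad i z) \<le> L1 * norm (y - z)"
    and hess_lip: "\<And>i y z. norm (hess i y - hess i z) \<le> L2 * norm (y - z)"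
    and delta: "0 < \<delta>" "\<delta> \<le> 1"
    and Q_contr: "\<And>A. norm (Q A - A) \<le> (1 - \<delta>) * norm A"
    and gamma_pos: "\<gamma> > 0"
    and H0: "H 0 = (\<chi> i. hess i (x 0 $ i))"
    and E_rec: "\<And>k. E (Suc k) = E k + H k - Ht k - blk_map Q (E k + H k - Ht k)"
    and Ht_rec: "\<And>k. Ht (Suc k) = Ht k + blk_map Q (H k - Ht k)"
    and Hh_def: "\<And>k. Hh k = Ht k + blk_map Q (E k + H k - Ht k)"
    and H_rec: "\<And>k. H (Suc k) = H k - \<gamma> *\<^sub>R (Hh k - blk_mult W (Hh k))
                 + (\<chi> i. hess i (x (Suc k) $ i)) - (\<chi> i. hess i (x k $ i))"
    and gamma_lt1: "\<gamma> < 1"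
  shows "\<forall>k. norm (H (Suc k) - blk_mult avg_mat (H (Suc k)))
           \<le> (1 - \<gamma> * (1 - \<sigma>)) * norm (H k - blk_mult avg_mat (H k))
             + 4 * \<gamma> * norm (E k) + 2 * \<gamma> * (1 - \<delta>) * norm (H k - Ht k)
             + L2 * norm (x (Suc k) - x k)"
proof
  fix k
  let ?A = "avg_mat :: real^'n^'n"
  define P where "P X = X - blk_mult ?A X" for X :: "real^'d^'d^'n"
  define D where "D = (\<chi> i. hess i (x (Suc k) $ i)) - (\<chi> i. hess i (x k $ i))"
  define R where "R = Hh k - H k"
  define Y where "Y = E k + H k - Ht k"
  have AW: "blk_mult ?A (blk_mult W X) = blk_mult ?A X" for X
    by (simp add: blk_comp avg_W[OF W_stoch W_sym])
  have WA: "blk_mult W (blk_mult ?A X) = blk_mult ?A X" for X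
    by (simp add: blk_comp avg_W[OF W_stoch W_sym])
  have AA: "blk_mult ?A (blk_mult ?A X) = blk_mult ?A X" for X
    by (simp add: blk_comp avg_avg)
  have Hs: "H (Suc k) = H k - \<gamma> *\<^sub>R (Hh k - blk_mult W (Hh k)) + D"
    using H_rec[where k=k] by (simp add: D_def algebra_simps)
  have Hh: "Hh k = H k + R" by (simp add: R_def)
  have AHs: "blk_mult ?A (H (Suc k)) = blk_mult ?A (H k) + blk_mult ?A D"
    unfolding Hs by (simp add: blk_add blk_diff blk_scale AW)
  have WP: "blk_mult (W - ?A) (H k - blk_mult ?A (H k)) = blk_mult W (H k) - blk_mult ?A (H k)"
    by (simp add: blk_mdiff blk_diff WA AA)
  have WHh: "blk_mult W (H k + R) = blk_mult W (H k) + blk_mult W R" by (simp add: blk_add)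
  have key: "P (H (Suc k)) = (1 - \<gamma>) *\<^sub>R P (H k) + \<gamma> *\<^sub>R blk_mult (W - ?A) (P (H k))
      - \<gamma> *\<^sub>R (R - blk_mult W R) + P D"
    unfolding P_def AHs unfolding Hs Hh
    by (simp only: WP WHh) (simp add: algebra_simps)
  have L2: "0 \<le> L2"
  proof -
    have h: "norm (hess i 1 - hess i 0) \<le> L2 * norm ((1::real^'d) - 0)" for i by (rule hess_lip)
    have "0 \<le> L2 * norm (1::real^'d)" using h[of undefined]
      by (metis diff_zero norm_ge_zero order_trans)
    moreover have "norm (1::real^'d) > 0" by simp
    ultimately show ?thesis by (simp add: zero_le_mult_iff)
  qed
  have sig0: "0 \<le> \<sigma>" unfolding sigma_def by (rule onorm_pos_le) simp
  have nD: "norm D \<le> L2 * norm (x (Suc k) - x k)"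
    by (rule blockwise_le) (use L2 hess_lip in \<open>auto simp: D_def\<close>)
  have nPD: "norm (P D) \<le> norm D"
  proof -
    have "P D = blk_mult (mat 1 - ?A) D" by (simp add: P_def blk_mdiff blk_id)
    also have "norm \<dots> \<le> 1 * norm D" by (rule lift_le[OF P_vec_bound]) simp
    finally show ?thesis by simp
  qed
  have nWR: "norm (blk_mult W R) \<le> norm R"
    using lift_le[OF W_vec_bound[OF W_nonneg W_stoch W_sym]] by simp
  have nWA: "norm (blk_mult (W - ?A) (P (H k))) \<le> \<sigma> * norm (P (H k))"
    by (rule lift_le) (use sig0 in \<open>auto simp: sigma_def intro: onorm\<close>)
  have nR: "norm R \<le> 2 * norm (E k) + (1 - \<delta>) * norm (H k - Ht k)"
  proof -
    have "R = (blk_map Q Y - Y) + E k" by (simp add: R_def Hh_def Y_def algebra_simps)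
    then have 1: "norm R \<le> norm (blk_map Q Y - Y) + norm (E k)" by (simp add: norm_triangle_ineq)
    have 2: "norm (blk_map Q Y - Y) \<le> (1 - \<delta>) * norm Y" by (rule Qmap_bound[OF Q_contr delta(2)])
    have "norm Y \<le> norm (E k) + norm (H k - Ht k)"
      unfolding Y_def by (metis add_diff_eq norm_triangle_ineq)
    then have 3: "(1 - \<delta>) * norm Y \<le> (1 - \<delta>) * (norm (E k) + norm (H k - Ht k))"
      using delta by (intro mult_left_mono) auto
    have 4: "0 \<le> \<delta> * norm (E k)" using delta by simp
    show ?thesis using 1 2 3 4 by (simp add: algebra_simps)
  qed
  have "norm (P (H (Suc k))) \<le> norm ((1 - \<gamma>) *\<^sub>R P (H k)) + norm (\<gamma> *\<^sub>R blk_mult (W - ?A) (P (H k)))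
      + norm (\<gamma> *\<^sub>R (R - blk_mult W R)) + norm (P D)"
    unfolding key by (rule tri4)
  also have "\<dots> \<le> (1 - \<gamma>) * norm (P (H k)) + \<gamma> * (\<sigma> * norm (P (H k))) + \<gamma> * (2 * norm R) + L2 * norm (x (Suc k) - x k)"
  proof -
    have "norm (R - blk_mult W R) \<le> 2 * norm R" using nWR norm_triangle_ineq4[of R "blk_mult W R"] by simp
    then show ?thesis using gamma_pos gamma_lt1 nWA nPD nD
      by (intro add_mono) (auto intro: mult_left_mono)
  qed
  also have "\<dots> \<le> (1 - \<gamma> * (1 - \<sigma>)) * norm (P (H k)) + 4 * \<gamma> * norm (E k) + 2 * \<gamma> * (1 - \<delta>) * norm (H k - Ht k)
             + L2 * norm (x (Suc k) - x k)"
  proof -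
    have "2*\<gamma> * norm R \<le> 2*\<gamma> * (2 * norm (E k) + (1 - \<delta>) * norm (H k - Ht k))"
      using nR gamma_pos by (intro mult_left_mono) auto
    then show ?thesis by (simp add: algebra_simps)
  qed
  finally show "norm (H (Suc k) - blk_mult avg_mat (H (Suc k)))
           \<le> (1 - \<gamma> * (1 - \<sigma>)) * norm (H k - blk_mult avg_mat (H k))
             + 4 * \<gamma> * norm (E k) + 2 * \<gamma> * (1 - \<delta>) * norm (H k - Ht k)
             + L2 * norm (x (Suc k) - x k)" by (simp add: P_def)
qed

end
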